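(* In the calculus $\lambda^{MD}$, if $\Gamma\vdash M_1:\tau@A$, then there is no infinite sequence $(M_i)_{i\ge1}$ of terms such that $M_i\longrightarrow M_{i+1}$ for all $i\ge1$, where $\longrightarrow$ is full reduction.
   Context: The calculus $\lambda^{MD}$. Fix countably infinite, pairwise disjoint sets of type-level constants ($X$), variables ($x,y,z$), constants ($c$) and stage variables ($\alpha,\beta,\gamma$). A stage ($A,B,C$) is a finite sequence of stage variables, $\varepsilon$ is the empty stage, and juxtaposition ($A\alpha$, $AB$) denotes concatenation. Kinds, types, terms, signatures and type environments are: $K ::= * \mid \Pi x{:}\tau.K$; $\tau,\sigma ::= X \mid \Pi x{:}\tau.\sigma \mid \tau\,M \mid \triangleright_\alpha\tau \mid \forall\alpha.\tau$; $M,N ::= c \mid x \mid \lambda x{:}\tau.M \mid M\,N \mid \blacktriangleright_\alpha M \mid \blacktriangleleft_\alpha M \mid \Lambda\alpha.M \mid M\,A \mid \%_\alpha M$; $\Sigma ::= \emptyset \mid \Sigma, X{::}K \mid \Sigma, c{:}\tau$; $\Gamma ::= \emptyset \mid \Gamma, x{:}\tau@A$. ($\blacktriangleright_\alpha M$ is quotation, $\blacktriangleleft_\alpha M$ escape, $M\,A$ applies a term to a stage, $\%_\alpha M$ is cross-stage persistence, $\triangleright_\alpha\tau$ is a code type.) $\lambda,\Pi$ bind $x$; $\Lambda,\forall$ bind $\alpha$; syntax is identified up to renaming of bound (stage) variables; $\mathrm{FTV}(\cdot)$ is the set of free stage variables. $M[x\mapsto N]$ (and its extension to types, kinds and type environments)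 is capture-avoiding substitution. Stage substitution $[\alpha\mapsto A]$ replaces free occurrences of $\alpha$ in stages by the sequence $A$, acting homomorphically on terms, types, kinds and environments, with $(\blacktriangleright_\beta M)[\alpha\mapsto A]=\blacktriangleright_{\beta[\alpha\mapsto A]}(M[\alpha\mapsto A])$ and likewise for $\blacktriangleleft,\%,\triangleright$, where $\blacktriangleright_{\alpha_1\cdots\alpha_n}M=\blacktriangleright_{\alpha_1}\cdots\blacktriangleright_{\alpha_n}M$, $\triangleright_{\alpha_1\cdots\alpha_n}\tau=\triangleright_{\alpha_1}\cdots\triangleright_{\alpha_n}\tau$, $\blacktriangleleft_{\alpha_1\cdots\alpha_n}M=\blacktriangleleft_{\alpha_n}\cdots\blacktriangleleft_{\alpha_1}M$, $\%_{\alpha_1\cdots\alpha_n}M=\%_{\alpha_n}\cdots\%_{\alpha_1}M$ (just $M$, resp. $\tau$, when $n=0$). Full reduction $\longrightarrow$ is the least relation on terms that is closed under all term-forming constructs (reduction may occur anywhere, including under $\lambda$, $\Lambda$, $\blacktriangleright_\alpha$, $\blacktriangleleft_\alpha$, $\%_\alpha$) and contains $(\lambda x{:}\tau.M)\,N\longrightarrow M[x\mapsto N]$, $\blacktriangleleft_\alpha\blacktriangleright_\alpha M\longrightarrow M$, and $(\Lambda\alpha.M)\,A\longrightarrow M[\alpha\mapsto A]$. Type system. Relative to a fixed signature $\Sigma$, the judgments $\vdash\Sigma$, $\vdash\Gamma$, $\Gamma\vdash K\ \mathrm{kind}@A$, $\Gamma\vdash\tau::K@A$, $\Gamma\vdash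 M:\tau@A$, $\Gamma\vdash K\equiv J@A$, $\Gamma\vdash\tau\equiv\sigma::K@A$, $\Gamma\vdash M\equiv N:\tau@A$ are defined simultaneously by the following rules; signatures and environments are assumed well formed throughout. Well-formedness: $\vdash\emptyset$; from $\vdash\Sigma$, $\emptyset\vdash K\ \mathrm{kind}@\varepsilon$, $X\notin dom(\Sigma)$ infer $\vdash\Sigma,X{::}K$; from $\vdash\Sigma$, $\emptyset\vdash\tau::*@\varepsilon$, $c\notin dom(\Sigma)$ infer $\vdash\Sigma,c{:}\tau$; $\vdash\emptyset$; from $\vdash\Gamma$, $\Gamma\vdash\tau::*@A$, $x$ not declared in $\Gamma$ infer $\vdash\Gamma,x{:}\tau@A$. Kinds: $\Gamma\vdash *\ \mathrm{kind}@A$; if $\Gamma\vdash\tau::*@A$ and $\Gamma,x{:}\tau@A\vdash K\ \mathrm{kind}@A$ then $\Gamma\vdash\Pi x{:}\tau.K\ \mathrm{kind}@A$. Kinding: if $X{::}K\in\Sigma$ then $\Gamma\vdash X::K@A$; if $\Gamma\vdash\tau::*@A$ and $\Gamma,x{:}\tau@A\vdash\sigma::*@A$ then $\Gamma\vdash\Pi x{:}\tau.\sigma::*@A$; if $\Gamma\vdash\sigma::\Pi x{:}\tau.K@A$ and $\Gamma\vdash M:\tau@A$ then $\Gamma\vdash\sigma\,M::K[x\mapsto M]@A$; if $\Gamma\vdash\tau::K@A$ and $\Gamma\vdash K\equiv J@A$ then $\Gamma\vdash\tau::J@A$; if $\Gamma\vdash\tau::*@A\alpha$ then $\Gamma\vdash\triangleright_\alpha\tau::*@A$;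 if $\Gamma\vdash\tau::K@A$ and $\alpha\notin\mathrm{FTV}(\Gamma)\cup\mathrm{FTV}(A)$ then $\Gamma\vdash\forall\alpha.\tau::K@A$; if $\Gamma\vdash\tau::*@A$ then $\Gamma\vdash\tau::*@A\alpha$. Typing: if $c{:}\tau\in\Sigma$ then $\Gamma\vdash c:\tau@A$ (any $A$); if $x{:}\tau@A\in\Gamma$ then $\Gamma\vdash x:\tau@A$; if $\Gamma\vdash\sigma::*@A$ and $\Gamma,x{:}\sigma@A\vdash M:\tau@A$ then $\Gamma\vdash\lambda x{:}\sigma.M:\Pi x{:}\sigma.\tau@A$; if $\Gamma\vdash M:\Pi x{:}\sigma.\tau@A$ and $\Gamma\vdash N:\sigma@A$ then $\Gamma\vdash M\,N:\tau[x\mapsto N]@A$; if $\Gamma\vdash M:\tau@A$ and $\Gamma\vdash\tau\equiv\sigma::K@A$ then $\Gamma\vdash M:\sigma@A$; if $\Gamma\vdash M:\tau@A\alpha$ then $\Gamma\vdash\blacktriangleright_\alpha M:\triangleright_\alpha\tau@A$; if $\Gamma\vdash M:\triangleright_\alpha\tau@A$ then $\Gamma\vdash\blacktriangleleft_\alpha M:\tau@A\alpha$; if $\Gamma\vdash M:\tau@A$ and $\alpha\notin\mathrm{FTV}(\Gamma)\cup\mathrm{FTV}(A)$ then $\Gamma\vdash\Lambda\alpha.M:\forall\alpha.\tau@A$; if $\Gamma\vdash M:\forall\alpha.\tau@A$ then $\Gamma\vdash M\,B:\tau[\alpha\mapsto B]@A$; if $\Gamma\vdash M:\tau@A$ then $\Gamma\vdash\%_\alpha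 M:\tau@A\alpha$. Equivalences: each equivalence judgment is reflexive (on well-formed kinds, kinded types, typed terms), symmetric and transitive. Kinds: $\Gamma\vdash\tau\equiv\sigma::*@A$ and $\Gamma,x{:}\tau@A\vdash K\equiv J@A$ give $\Gamma\vdash\Pi x{:}\tau.K\equiv\Pi x{:}\sigma.J@A$; $\Gamma\vdash K\equiv J@A$ gives $\Gamma\vdash K\equiv J@A\alpha$. Types: $\Gamma\vdash\tau\equiv\sigma::*@A$ and $\Gamma,x{:}\tau@A\vdash\rho\equiv\pi::*@A$ give $\Gamma\vdash\Pi x{:}\tau.\rho\equiv\Pi x{:}\sigma.\pi::*@A$; $\Gamma\vdash\tau\equiv\sigma::\Pi x{:}\rho.K@A$ and $\Gamma\vdash M\equiv N:\rho@A$ give $\Gamma\vdash\tau\,M\equiv\sigma\,N::K[x\mapsto M]@A$; $\Gamma\vdash\tau\equiv\sigma::*@A\alpha$ gives $\Gamma\vdash\triangleright_\alpha\tau\equiv\triangleright_\alpha\sigma::*@A$; $\Gamma\vdash\tau\equiv\sigma::*@A$ with $\alpha\notin\mathrm{FTV}(\Gamma)\cup\mathrm{FTV}(A)$ gives $\Gamma\vdash\forall\alpha.\tau\equiv\forall\alpha.\sigma::*@A$; $\Gamma\vdash\tau\equiv\sigma::*@A$ gives $\Gamma\vdash\tau\equiv\sigma::*@A\alpha$. Terms: congruence rules mirroring the typing rules for $\lambda$ ($\Gamma\vdash\tau\equiv\sigma::*@A$ and $\Gamma,x{:}\tau@A\vdash M\equiv N:\rho@A$ give $\Gamma\vdash\lambda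 x{:}\tau.M\equiv\lambda x{:}\sigma.N:\Pi x{:}\tau.\rho@A$), application, $\blacktriangleright_\alpha$, $\blacktriangleleft_\alpha$, $\Lambda\alpha$ (same side condition), stage application ($\Gamma\vdash M\equiv N:\forall\alpha.\tau@A$ gives $\Gamma\vdash M\,B\equiv N\,B:\tau[\alpha\mapsto B]@A$) and $\%_\alpha$; and the axioms: if $\Gamma,x{:}\sigma@A\vdash M:\tau@A$ and $\Gamma\vdash N:\sigma@A$ then $\Gamma\vdash(\lambda x{:}\sigma.M)\,N\equiv M[x\mapsto N]:\tau[x\mapsto N]@A$; if $\Gamma\vdash M\equiv N:\tau@A$ then $\Gamma\vdash\blacktriangleleft_\alpha\blacktriangleright_\alpha M\equiv N:\tau@A$; if $\Gamma\vdash\Lambda\alpha.M:\forall\alpha.\tau@A$ then $\Gamma\vdash(\Lambda\alpha.M)\,\varepsilon\equiv M[\alpha\mapsto\varepsilon]:\tau[\alpha\mapsto\varepsilon]@A$; if $\Gamma\vdash M:\tau@A\alpha$ and $\Gamma\vdash M:\tau@A$ then $\Gamma\vdash\%_\alpha M\equiv M:\tau@A\alpha$. *)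

theory Defs
  imports Main
begin

text \<open>Term variables and stage variables are both represented by de Bruijn
indices (two independent index spaces).  lambda and Pi bind term index 0;
Lambda and forall bind stage index 0.  A stage is a list of stage variables,
the empty list is epsilon and stage concatenation is list append.\<close>

type_synonym stage = "nat list"

datatype ty =
    TConst nat
  | TPi ty ty             \<comment> \<open>Pi x:tau. sigma  (sigma under the binder)\<close>
  | TApp ty trm
  | TCode nat ty
  | TAll ty
and trm =
    Const nat
  | Var nat
  | Lam ty trm
  | App trm trm
  | Quote nat trm
  | Esc nat trm
  | SLam trm
  | SApp trm stage
  | CSP nat trm           \<comment> \<open>cross-stage persistence, percent_alpha M\<close>

datatype kind = Star | KPi ty kind

datatype sig_entry = SType nat kind | SConst nat ty

type_synonym signature = "sig_entry list"   \<comment> \<open>head = most recent declaration\<close>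
type_synonym env = "(ty \<times> stage) list"      \<comment> \<open>head = most recent declaration (index 0)\<close>

definition quotes :: "stage \<Rightarrow> trm \<Rightarrow> trm" where
  "quotes A M = foldr Quote A M"
definition codes :: "stage \<Rightarrow> ty \<Rightarrow> ty" where
  "codes A t = foldr TCode A t"
definition escs :: "stage \<Rightarrow> trm \<Rightarrow> trm" where
  "escs A M = foldl (\<lambda>N a. Esc a N) M A"    \<comment> \<open>Esc an (... (Esc a1 M))\<close>
definition csps :: "stage \<Rightarrow> trm \<Rightarrow> trm" where
  "csps A M = foldl (\<lambda>N a. CSP a N) M A"

definition shv :: "nat \<Rightarrow> nat \<Rightarrow> nat" where
  "shv k i = (if i < k then i else Suc i)"

definition ssv :: "nat \<Rightarrow> stage \<Rightarrow> nat \<Rightarrow> stage" where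
  "ssv k A i = (if i < k then [i] else if i = k then A else [i - 1])"

definition ssubst_stage :: "nat \<Rightarrow> stage \<Rightarrow> stage \<Rightarrow> stage" where
  "ssubst_stage k A B = concat (map (ssv k A) B)"

primrec sshift_ty :: "nat \<Rightarrow> ty \<Rightarrow> ty" and sshift_tm :: "nat \<Rightarrow> trm \<Rightarrow> trm" where
  "sshift_ty k (TConst X) = TConst X"
| "sshift_ty k (TPi t s) = TPi (sshift_ty k t) (sshift_ty k s)"
| "sshift_ty k (TApp t M) = TApp (sshift_ty k t) (sshift_tm k M)"
| "sshift_ty k (TCode a t) = TCode (shv k a) (sshift_ty k t)"
| "sshift_ty k (TAll t) = TAll (sshift_ty (Suc k) t)"
| "sshift_tm k (Const c) = Const c"
| "sshift_tm k (Var x) = Var x"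
| "sshift_tm k (Lam t M) = Lam (sshift_ty k t) (sshift_tm k M)"
| "sshift_tm k (App M N) = App (sshift_tm k M) (sshift_tm k N)"
| "sshift_tm k (Quote a M) = Quote (shv k a) (sshift_tm k M)"
| "sshift_tm k (Esc a M) = Esc (shv k a) (sshift_tm k M)"
| "sshift_tm k (SLam M) = SLam (sshift_tm (Suc k) M)"
| "sshift_tm k (SApp M A) = SApp (sshift_tm k M) (map (shv k) A)"
| "sshift_tm k (CSP a M) = CSP (shv k a) (sshift_tm k M)"

primrec sshift_kind :: "nat \<Rightarrow> kind \<Rightarrow> kind" where
  "sshift_kind k Star = Star"
| "sshift_kind k (KPi t K) = KPi (sshift_ty k t) (sshift_kind k K)"

definition sshift_env :: "env \<Rightarrow> env" where
  "sshift_env G = map (\<lambda>(t, B). (sshift_ty 0 t, map (shv 0) B)) G"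

primrec ssubst_ty :: "nat \<Rightarrow> stage \<Rightarrow> ty \<Rightarrow> ty" and ssubst_tm :: "nat \<Rightarrow> stage \<Rightarrow> trm \<Rightarrow> trm" where
  "ssubst_ty k A (TConst X) = TConst X"
| "ssubst_ty k A (TPi t s) = TPi (ssubst_ty k A t) (ssubst_ty k A s)"
| "ssubst_ty k A (TApp t M) = TApp (ssubst_ty k A t) (ssubst_tm k A M)"
| "ssubst_ty k A (TCode a t) = codes (ssv k A a) (ssubst_ty k A t)"
| "ssubst_ty k A (TAll t) = TAll (ssubst_ty (Suc k) (map (shv 0) A) t)"
| "ssubst_tm k A (Const c) = Const c"
| "ssubst_tm k A (Var x) = Var x"
| "ssubst_tm k A (Lam t M) = Lam (ssubst_ty k A t) (ssubst_tm k A M)"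
| "ssubst_tm k A (App M N) = App (ssubst_tm k A M) (ssubst_tm k A N)"
| "ssubst_tm k A (Quote a M) = quotes (ssv k A a) (ssubst_tm k A M)"
| "ssubst_tm k A (Esc a M) = escs (ssv k A a) (ssubst_tm k A M)"
| "ssubst_tm k A (SLam M) = SLam (ssubst_tm (Suc k) (map (shv 0) A) M)"
| "ssubst_tm k A (SApp M B) = SApp (ssubst_tm k A M) (ssubst_stage k A B)"
| "ssubst_tm k A (CSP a M) = csps (ssv k A a) (ssubst_tm k A M)"

primrec ssubst_kind :: "nat \<Rightarrow> stage \<Rightarrow> kind \<Rightarrow> kind" where
  "ssubst_kind k A Star = Star"
| "ssubst_kind k A (KPi t K) = KPi (ssubst_ty k A t) (ssubst_kind k A K)"

definition unbind :: "nat set \<Rightarrow> nat set" where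
  "unbind S = {i. Suc i \<in> S}"

primrec fsv_ty :: "ty \<Rightarrow> nat set" and fsv_tm :: "trm \<Rightarrow> nat set" where
  "fsv_ty (TConst X) = {}"
| "fsv_ty (TPi t s) = fsv_ty t \<union> fsv_ty s"
| "fsv_ty (TApp t M) = fsv_ty t \<union> fsv_tm M"
| "fsv_ty (TCode a t) = insert a (fsv_ty t)"
| "fsv_ty (TAll t) = unbind (fsv_ty t)"
| "fsv_tm (Const c) = {}"
| "fsv_tm (Var x) = {}"
| "fsv_tm (Lam t M) = fsv_ty t \<union> fsv_tm M"
| "fsv_tm (App M N) = fsv_tm M \<union> fsv_tm N"
| "fsv_tm (Quote a M) = insert a (fsv_tm M)"
| "fsv_tm (Esc a M) = insert a (fsv_tm M)"
| "fsv_tm (SLam M) = unbind (fsv_tm M)"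
| "fsv_tm (SApp M A) = fsv_tm M \<union> set A"
| "fsv_tm (CSP a M) = insert a (fsv_tm M)"

primrec fsv_kind :: "kind \<Rightarrow> nat set" where
  "fsv_kind Star = {}"
| "fsv_kind (KPi t K) = fsv_ty t \<union> fsv_kind K"

definition fsv_env :: "env \<Rightarrow> nat set" where
  "fsv_env G = (\<Union>(t, B) \<in> set G. fsv_ty t \<union> set B)"

primrec lift_ty :: "nat \<Rightarrow> nat \<Rightarrow> ty \<Rightarrow> ty" and lift_tm :: "nat \<Rightarrow> nat \<Rightarrow> trm \<Rightarrow> trm" where
  "lift_ty d k (TConst X) = TConst X"
| "lift_ty d k (TPi t s) = TPi (lift_ty d k t) (lift_ty d (Suc k) s)"
| "lift_ty d k (TApp t M) = TApp (lift_ty d k t) (lift_tm d k M)"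
| "lift_ty d k (TCode a t) = TCode a (lift_ty d k t)"
| "lift_ty d k (TAll t) = TAll (lift_ty d k t)"
| "lift_tm d k (Const c) = Const c"
| "lift_tm d k (Var x) = Var (if x < k then x else x + d)"
| "lift_tm d k (Lam t M) = Lam (lift_ty d k t) (lift_tm d (Suc k) M)"
| "lift_tm d k (App M N) = App (lift_tm d k M) (lift_tm d k N)"
| "lift_tm d k (Quote a M) = Quote a (lift_tm d k M)"
| "lift_tm d k (Esc a M) = Esc a (lift_tm d k M)"
| "lift_tm d k (SLam M) = SLam (lift_tm d k M)"
| "lift_tm d k (SApp M A) = SApp (lift_tm d k M) A"
| "lift_tm d k (CSP a M) = CSP a (lift_tm d k M)"

primrec subst_ty :: "nat \<Rightarrow> trm \<Rightarrow> ty \<Rightarrow> ty" and subst_tm :: "nat \<Rightarrow> trm \<Rightarrow> trm \<Rightarrow> trm" where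
  "subst_ty k N (TConst X) = TConst X"
| "subst_ty k N (TPi t s) = TPi (subst_ty k N t) (subst_ty (Suc k) N s)"
| "subst_ty k N (TApp t M) = TApp (subst_ty k N t) (subst_tm k N M)"
| "subst_ty k N (TCode a t) = TCode a (subst_ty k N t)"
| "subst_ty k N (TAll t) = TAll (subst_ty k (sshift_tm 0 N) t)"
| "subst_tm k N (Const c) = Const c"
| "subst_tm k N (Var x) = (if x < k then Var x else if x = k then lift_tm k 0 N else Var (x - 1))"
| "subst_tm k N (Lam t M) = Lam (subst_ty k N t) (subst_tm (Suc k) N M)"
| "subst_tm k N (App M P) = App (subst_tm k N M) (subst_tm k N P)"
| "subst_tm k N (Quote a M) = Quote a (subst_tm k N M)"
| "subst_tm k N (Esc a M) = Esc a (subst_tm k N M)"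
| "subst_tm k N (SLam M) = SLam (subst_tm k (sshift_tm 0 N) M)"
| "subst_tm k N (SApp M A) = SApp (subst_tm k N M) A"
| "subst_tm k N (CSP a M) = CSP a (subst_tm k N M)"

primrec subst_kind :: "nat \<Rightarrow> trm \<Rightarrow> kind \<Rightarrow> kind" where
  "subst_kind k N Star = Star"
| "subst_kind k N (KPi t K) = KPi (subst_ty k N t) (subst_kind (Suc k) N K)"

inductive red :: "trm \<Rightarrow> trm \<Rightarrow> bool" where
  beta: "red (App (Lam t M) N) (subst_tm 0 N M)"
| esc_quote: "red (Esc a (Quote a M)) M"
| sbeta: "red (SApp (SLam M) A) (ssubst_tm 0 A M)"
| lam: "red M M' \<Longrightarrow> red (Lam t M) (Lam t M')"
| app1: "red M M' \<Longrightarrow> red (App M N) (App M' N)"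
| app2: "red N N' \<Longrightarrow> red (App M N) (App M N')"
| quote: "red M M' \<Longrightarrow> red (Quote a M) (Quote a M')"
| esc: "red M M' \<Longrightarrow> red (Esc a M) (Esc a M')"
| slam: "red M M' \<Longrightarrow> red (SLam M) (SLam M')"
| sapp: "red M M' \<Longrightarrow> red (SApp M A) (SApp M' A)"
| csp: "red M M' \<Longrightarrow> red (CSP a M) (CSP a M')"

inductive
  kwf :: "signature \<Rightarrow> env \<Rightarrow> kind \<Rightarrow> stage \<Rightarrow> bool"
  and kinding :: "signature \<Rightarrow> env \<Rightarrow> ty \<Rightarrow> kind \<Rightarrow> stage \<Rightarrow> bool"
  and typing :: "signature \<Rightarrow> env \<Rightarrow> trm \<Rightarrow> ty \<Rightarrow> stage \<Rightarrow> bool"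
  and keq :: "signature \<Rightarrow> env \<Rightarrow> kind \<Rightarrow> kind \<Rightarrow> stage \<Rightarrow> bool"
  and tyeq :: "signature \<Rightarrow> env \<Rightarrow> ty \<Rightarrow> ty \<Rightarrow> kind \<Rightarrow> stage \<Rightarrow> bool"
  and tmeq :: "signature \<Rightarrow> env \<Rightarrow> trm \<Rightarrow> trm \<Rightarrow> ty \<Rightarrow> stage \<Rightarrow> bool"
  for S :: signature
where
  kwf_star: "kwf S G Star A"
| kwf_pi: "kinding S G t Star A \<Longrightarrow> kwf S ((t, A) # G) K A \<Longrightarrow> kwf S G (KPi t K) A"
| k_const: "SType X K \<in> set S \<Longrightarrow> kinding S G (TConst X) K A"
| k_pi: "kinding S G t Star A \<Longrightarrow> kinding S ((t, A) # G) s Star A \<Longrightarrow> kinding S G (TPi t s) Star A"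
| k_app: "kinding S G s (KPi t K) A \<Longrightarrow> typing S G M t A \<Longrightarrow> kinding S G (TApp s M) (subst_kind 0 M K) A"
| k_conv: "kinding S G t K A \<Longrightarrow> keq S G K J A \<Longrightarrow> kinding S G t J A"
| k_code: "kinding S G t Star (A @ [a]) \<Longrightarrow> kinding S G (TCode a t) Star A"
| k_all: "kinding S (sshift_env G) t K' (map (shv 0) A) \<Longrightarrow> j \<notin> fsv_env G \<Longrightarrow> j \<notin> set A
          \<Longrightarrow> Suc j \<notin> fsv_kind K' \<Longrightarrow> kinding S G (TAll t) (ssubst_kind 0 [j] K') A"
| k_stage: "kinding S G t Star A \<Longrightarrow> kinding S G t Star (A @ [a])"
| t_const: "SConst c t \<in> set S \<Longrightarrow> typing S G (Const c) t A"
| t_var: "x < length G \<Longrightarrow> G ! x = (t, A) \<Longrightarrow> typing S G (Var x) (lift_ty (Suc x) 0 t) A"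
| t_lam: "kinding S G s Star A \<Longrightarrow> typing S ((s, A) # G) M t A \<Longrightarrow> typing S G (Lam s M) (TPi s t) A"
| t_app: "typing S G M (TPi s t) A \<Longrightarrow> typing S G N s A \<Longrightarrow> typing S G (App M N) (subst_ty 0 N t) A"
| t_conv: "typing S G M t A \<Longrightarrow> tyeq S G t s K A \<Longrightarrow> typing S G M s A"
| t_quote: "typing S G M t (A @ [a]) \<Longrightarrow> typing S G (Quote a M) (TCode a t) A"
| t_esc: "typing S G M (TCode a t) A \<Longrightarrow> typing S G (Esc a M) t (A @ [a])"
| t_slam: "typing S (sshift_env G) M t (map (shv 0) A) \<Longrightarrow> typing S G (SLam M) (TAll t) A"
| t_sapp: "typing S G M (TAll t) A \<Longrightarrow> typing S G (SApp M B) (ssubst_ty 0 B t) A"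
| t_csp: "typing S G M t A \<Longrightarrow> typing S G (CSP a M) t (A @ [a])"
| keq_refl: "kwf S G K A \<Longrightarrow> keq S G K K A"
| keq_sym: "keq S G K J A \<Longrightarrow> keq S G J K A"
| keq_trans: "keq S G K J A \<Longrightarrow> keq S G J L A \<Longrightarrow> keq S G K L A"
| keq_pi: "tyeq S G t s Star A \<Longrightarrow> keq S ((t, A) # G) K J A \<Longrightarrow> keq S G (KPi t K) (KPi s J) A"
| keq_stage: "keq S G K J A \<Longrightarrow> keq S G K J (A @ [a])"
| tyeq_refl: "kinding S G t K A \<Longrightarrow> tyeq S G t t K A"
| tyeq_sym: "tyeq S G t s K A \<Longrightarrow> tyeq S G s t K A"
| tyeq_trans: "tyeq S G t s K A \<Longrightarrow> tyeq S G s r K A \<Longrightarrow> tyeq S G t r K A"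
| tyeq_pi: "tyeq S G t s Star A \<Longrightarrow> tyeq S ((t, A) # G) r p Star A \<Longrightarrow> tyeq S G (TPi t r) (TPi s p) Star A"
| tyeq_app: "tyeq S G t s (KPi r K) A \<Longrightarrow> tmeq S G M N r A
            \<Longrightarrow> tyeq S G (TApp t M) (TApp s N) (subst_kind 0 M K) A"
| tyeq_code: "tyeq S G t s Star (A @ [a]) \<Longrightarrow> tyeq S G (TCode a t) (TCode a s) Star A"
| tyeq_all: "tyeq S (sshift_env G) t s Star (map (shv 0) A) \<Longrightarrow> tyeq S G (TAll t) (TAll s) Star A"
| tyeq_stage: "tyeq S G t s Star A \<Longrightarrow> tyeq S G t s Star (A @ [a])"
| tmeq_refl: "typing S G M t A \<Longrightarrow> tmeq S G M M t A"
| tmeq_sym: "tmeq S G M N t A \<Longrightarrow> tmeq S G N M t A"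
| tmeq_trans: "tmeq S G M N t A \<Longrightarrow> tmeq S G N P t A \<Longrightarrow> tmeq S G M P t A"
| tmeq_lam: "tyeq S G t s Star A \<Longrightarrow> tmeq S ((t, A) # G) M N r A
             \<Longrightarrow> tmeq S G (Lam t M) (Lam s N) (TPi t r) A"
| tmeq_app: "tmeq S G M M' (TPi s t) A \<Longrightarrow> tmeq S G N N' s A
             \<Longrightarrow> tmeq S G (App M N) (App M' N') (subst_ty 0 N t) A"
| tmeq_quote: "tmeq S G M N t (A @ [a]) \<Longrightarrow> tmeq S G (Quote a M) (Quote a N) (TCode a t) A"
| tmeq_esc: "tmeq S G M N (TCode a t) A \<Longrightarrow> tmeq S G (Esc a M) (Esc a N) t (A @ [a])"
| tmeq_slam: "tmeq S (sshift_env G) M N t (map (shv 0) A) \<Longrightarrow> tmeq S G (SLam M) (SLam N) (TAll t) A"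
| tmeq_sapp: "tmeq S G M N (TAll t) A \<Longrightarrow> tmeq S G (SApp M B) (SApp N B) (ssubst_ty 0 B t) A"
| tmeq_csp: "tmeq S G M N t A \<Longrightarrow> tmeq S G (CSP a M) (CSP a N) t (A @ [a])"
| tmeq_beta: "typing S ((s, A) # G) M t A \<Longrightarrow> typing S G N s A
              \<Longrightarrow> tmeq S G (App (Lam s M) N) (subst_tm 0 N M) (subst_ty 0 N t) A"
| tmeq_escquote: "tmeq S G M N t A \<Longrightarrow> tmeq S G (Esc a (Quote a M)) N t A"
| tmeq_seps: "typing S G (SLam M) (TAll t) A
              \<Longrightarrow> tmeq S G (SApp (SLam M) []) (ssubst_tm 0 [] M) (ssubst_ty 0 [] t) A"
| tmeq_csp_ax: "typing S G M t (A @ [a]) \<Longrightarrow> typing S G M t A \<Longrightarrow> tmeq S G (CSP a M) M t (A @ [a])"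

primrec sig_dom :: "signature \<Rightarrow> nat set" where
  "sig_dom [] = {}"
| "sig_dom (e # S) = (case e of SConst c t \<Rightarrow> insert c (sig_dom S) | SType X K \<Rightarrow> sig_dom S)"

primrec sig_tdom :: "signature \<Rightarrow> nat set" where
  "sig_tdom [] = {}"
| "sig_tdom (e # S) = (case e of SType X K \<Rightarrow> insert X (sig_tdom S) | SConst c t \<Rightarrow> sig_tdom S)"

fun wf_sig :: "signature \<Rightarrow> bool" where
  "wf_sig [] = True"
| "wf_sig (SType X K # S) = (wf_sig S \<and> kwf S [] K [] \<and> X \<notin> sig_tdom S)"
| "wf_sig (SConst c t # S) = (wf_sig S \<and> kinding S [] t Star [] \<and> c \<notin> sig_dom S)"

fun wf_env :: "signature \<Rightarrow> env \<Rightarrow> bool" where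
  "wf_env S [] = True"
| "wf_env S ((t, A) # G) = (wf_env S G \<and> kinding S G t Star A)"

end

theory Submission imports Defs begin

datatype lt = LC nat | LV nat | LL lt | LA lt lt
datatype sty = Base | Arr sty sty

primrec llift :: "nat \<Rightarrow> nat \<Rightarrow> lt \<Rightarrow> lt" where
  "llift d k (LC c) = LC c"
| "llift d k (LV x) = LV (if x < k then x else x + d)"
| "llift d k (LL M) = LL (llift d (Suc k) M)"
| "llift d k (LA M N) = LA (llift d k M) (llift d k N)"

primrec lsubst :: "nat \<Rightarrow> lt \<Rightarrow> lt \<Rightarrow> lt" where
  "lsubst k N (LC c) = LC c"
| "lsubst k N (LV x) = (if x < k then LV x else if x = k then llift k 0 N else LV (x - 1))"
| "lsubst k N (LL M) = LL (lsubst (Suc k) N M)"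
| "lsubst k N (LA M P) = LA (lsubst k N M) (lsubst k N P)"

inductive lbeta :: "lt \<Rightarrow> lt \<Rightarrow> bool" where
  lb_beta: "lbeta (LA (LL M) N) (lsubst 0 N M)"
| lb_lam: "lbeta M M' \<Longrightarrow> lbeta (LL M) (LL M')"
| lb_app1: "lbeta M M' \<Longrightarrow> lbeta (LA M N) (LA M' N)"
| lb_app2: "lbeta N N' \<Longrightarrow> lbeta (LA M N) (LA M N')"

inductive ltyping :: "sty list \<Rightarrow> lt \<Rightarrow> sty \<Rightarrow> bool" where
  lt_var: "x < length G \<Longrightarrow> ltyping G (LV x) (G ! x)"
| lt_const: "ltyping G (LC c) T"
| lt_lam: "ltyping (T # G) M U \<Longrightarrow> ltyping G (LL M) (Arr T U)"
| lt_app: "ltyping G M (Arr T U) \<Longrightarrow> ltyping G N T \<Longrightarrow> ltyping G (LA M N) U"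

lemma llift_0[simp]: "llift 0 k t = t"
  by (induction t arbitrary: k) auto

lemma lemA: "k \<le> j \<Longrightarrow> j \<le> k + d \<Longrightarrow> lsubst j N (llift (Suc d) k t) = llift d k t"
  by (induction t arbitrary: k j) auto

lemma lemC: "l \<le> i \<Longrightarrow> i \<le> l + k \<Longrightarrow> llift j i (llift k l N) = llift (j + k) l N"
  by (induction N arbitrary: i l) auto

lemma lemB: "i \<le> k \<Longrightarrow> lsubst (k + j) N (llift j i P) = llift j i (lsubst k N P)"
proof (induction P arbitrary: i k)
  case (LV x)
  then show ?case by (auto simp: lemC add.commute)
next
  case (LL P)
  then show ?case using LL.IH[of "Suc i" "Suc k"] by auto
qed auto

lemma subst_subst: "lsubst (k + j) N (lsubst j P M) = lsubst j (lsubst k N P) (lsubst (Suc (k + j)) N M)"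
proof (induction M arbitrary: j)
  case (LV x)
  show ?case
  proof -
    consider "x < j" | "x = j" | "j < x \<and> x < Suc (k + j)" | "x = Suc (k + j)" | "x > Suc (k + j)" by linarith
    then show ?thesis
    proof cases
      case 2 then show ?thesis using lemB[of 0 k j N P] by simp
    next
      case 4 then show ?thesis using lemA[of 0 j "k + j" "lsubst k N P" N] by simp
    qed auto
  qed
next
  case (LL M)
  then show ?case using LL.IH[of "Suc j"] by simp
qed auto

lemma lbeta_subst: "lbeta M M' \<Longrightarrow> lbeta (lsubst k N M) (lsubst k N M')"
proof (induction arbitrary: k rule: lbeta.induct)
  case (lb_beta M P)
  have "lsubst k N (lsubst 0 P M) = lsubst 0 (lsubst k N P) (lsubst (Suc k) N M)"
    using subst_subst[of k 0 N P M] by simp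
  then show ?case by (simp add: lbeta.lb_beta)
qed (auto intro: lbeta.intros)

abbreviation lSN :: "lt \<Rightarrow> bool" where
  "lSN \<equiv> Wellfounded.accp (\<lambda>N M. lbeta M N)"

lemma lSN_step: "lSN M \<Longrightarrow> lbeta M M' \<Longrightarrow> lSN M'"
  using accp_downward by metis

lemma lSN_app_left: "lSN P \<Longrightarrow> P = LA M N \<Longrightarrow> lSN M"
proof (induction arbitrary: M N rule: Wellfounded.accp.induct)
  case (accI x)
  show ?case
  proof (rule Wellfounded.accp.accI)
    fix y assume "lbeta M y"
    then have "lbeta x (LA y N)" using accI.prems by (simp add: lbeta.lb_app1)
    then show "lSN y" using accI.IH by blast
  qed
qed

lemma lSN_subst: "lSN P \<Longrightarrow> P = lsubst k N M \<Longrightarrow> lSN M"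
proof (induction arbitrary: M rule: Wellfounded.accp.induct)
  case (accI x)
  show ?case
  proof (rule Wellfounded.accp.accI)
    fix y assume "lbeta M y"
    then have "lbeta x (lsubst k N y)" using accI.prems by (simp add: lbeta_subst)
    then show "lSN y" using accI.IH by blast
  qed
qed

primrec RED :: "sty \<Rightarrow> lt \<Rightarrow> bool" where
  "RED Base M = lSN M"
| "RED (Arr T U) M = (\<forall>N. RED T N \<longrightarrow> RED U (LA M N))"

definition neutral :: "lt \<Rightarrow> bool" where
  "neutral M = (\<forall>P. M \<noteq> LL P)"

lemma CR: "(RED T M \<longrightarrow> lSN M) \<and> (RED T M \<longrightarrow> lbeta M M' \<longrightarrow> RED T M')
   \<and> (neutral M \<longrightarrow> (\<forall>M'. lbeta M M' \<longrightarrow> RED T M') \<longrightarrow> RED T M)"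
proof (induction T arbitrary: M M')
  case Base
  then show ?case by (auto intro: Wellfounded.accp.accI lSN_step)
next
  case (Arr T U)
  have cr3T: "\<And>M. neutral M \<Longrightarrow> (\<forall>M'. lbeta M M' \<longrightarrow> RED T M') \<Longrightarrow> RED T M"
    using Arr.IH(1) by blast
  have var: "RED T (LV 0)"
    by (rule cr3T) (auto simp: neutral_def elim: lbeta.cases)
  have cr1: "RED (Arr T U) M \<longrightarrow> lSN M" for M
  proof
    assume "RED (Arr T U) M"
    then have "RED U (LA M (LV 0))" using var by simp
    then have "lSN (LA M (LV 0))" using Arr.IH(2) by blast
    then show "lSN M" using lSN_app_left by blast
  qed
  have cr2: "RED (Arr T U) M \<longrightarrow> lbeta M M' \<longrightarrow> RED (Arr T U) M'" for M M'
    using Arr.IH(2) by (auto intro: lbeta.lb_app1)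
  have cr3: "neutral M \<longrightarrow> (\<forall>M'. lbeta M M' \<longrightarrow> RED (Arr T U) M') \<longrightarrow> RED (Arr T U) M" for M
  proof (intro impI)
    assume ne: "neutral M" and red: "\<forall>M'. lbeta M M' \<longrightarrow> RED (Arr T U) M'"
    have "lSN N \<Longrightarrow> RED T N \<longrightarrow> RED U (LA M N)" for N
    proof (induction rule: Wellfounded.accp.induct)
      case (accI N)
      show ?case
      proof
        assume rN: "RED T N"
        have "neutral (LA M N)" by (simp add: neutral_def)
        moreover have "\<forall>P. lbeta (LA M N) P \<longrightarrow> RED U P"
        proof (intro allI impI)
          fix P assume "lbeta (LA M N) P"
          then show "RED U P"
          proof cases
            case (lb_beta M0) then show ?thesis using ne by (simp add: neutral_def)
          next
            case (lb_app1 M') then show ?thesis using red rN by auto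
          next
            case (lb_app2 N') then show ?thesis using accI.IH rN Arr.IH(1) by blast
          qed
        qed
        ultimately show "RED U (LA M N)" using Arr.IH(2) by blast
      qed
    qed
    then show "RED (Arr T U) M" using Arr.IH(1) by auto
  qed
  show ?case using cr1 cr2 cr3 by blast
qed

lemma CR1: "RED T M \<Longrightarrow> lSN M" using CR by blast
lemma CR2: "RED T M \<Longrightarrow> lbeta M M' \<Longrightarrow> RED T M'" using CR by blast
lemma CR3: "neutral M \<Longrightarrow> (\<And>M'. lbeta M M' \<Longrightarrow> RED T M') \<Longrightarrow> RED T M" using CR by blast

lemma RED_var: "RED T (LV i)"
  by (rule CR3) (auto simp: neutral_def elim: lbeta.cases)

lemma RED_const: "RED T (LC c)"
  by (rule CR3) (auto simp: neutral_def elim: lbeta.cases)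

lemma RED_lam_aux:
  assumes "lSN M"
  shows "(\<forall>N. RED T N \<longrightarrow> RED U (lsubst 0 N M)) \<Longrightarrow> lSN N \<Longrightarrow> RED T N \<Longrightarrow> RED U (LA (LL M) N)"
  using assms
proof (induction M arbitrary: N rule: Wellfounded.accp.induct)
  case (accI M)
  note outerIH = accI.IH and outerP = accI.prems
  from accI.prems(2) accI.prems(3) show ?case
  proof (induction N rule: Wellfounded.accp.induct)
    case (accI N)
    show ?case
    proof (rule CR3)
      show "neutral (LA (LL M) N)" by (simp add: neutral_def)
    next
      fix P assume "lbeta (LA (LL M) N) P"
      then show "RED U P"
      proof cases
        case lb_beta then show ?thesis using accI.prems outerP(1) by blast
      next
        case (lb_app1 M1)
        from \<open>lbeta (LL M) M1\<close> obtain M' where M1: "M1 = LL M'" and "lbeta M M'"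
          by (cases rule: lbeta.cases) auto
        have "\<forall>N. RED T N \<longrightarrow> RED U (lsubst 0 N M')"
          using outerP(1) \<open>lbeta M M'\<close> CR2 lbeta_subst by blast
        then show ?thesis using outerIH \<open>lbeta M M'\<close> M1 lb_app1 accI.hyps accI.prems
          by (metis Wellfounded.accp.accI)
      next
        case (lb_app2 N')
        then show ?thesis using accI.IH accI.prems CR2 by blast
      qed
    qed
  qed
qed

lemma RED_lam:
  assumes "\<And>N. RED T N \<Longrightarrow> RED U (lsubst 0 N M)"
  shows "RED (Arr T U) (LL M)"
proof -
  have "RED U (lsubst 0 (LV 0) M)" using assms RED_var by blast
  then have "lSN M" using CR1 lSN_subst by blast
  then show ?thesis using RED_lam_aux assms CR1 by auto
qed

primrec psub :: "nat \<Rightarrow> (nat \<Rightarrow> lt) \<Rightarrow> lt \<Rightarrow> lt" where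
  "psub n s (LC c) = LC c"
| "psub n s (LV i) = (if i < n then LV i else llift n 0 (s (i - n)))"
| "psub n s (LL M) = LL (psub (Suc n) s M)"
| "psub n s (LA M N) = LA (psub n s M) (psub n s N)"

definition scons :: "lt \<Rightarrow> (nat \<Rightarrow> lt) \<Rightarrow> nat \<Rightarrow> lt" where
  "scons N s i = (case i of 0 \<Rightarrow> N | Suc j \<Rightarrow> s j)"

lemma psub_scons: "lsubst n N (psub (Suc n) s M) = psub n (scons N s) M"
proof (induction M arbitrary: n)
  case (LV i)
  show ?case
  proof -
    consider "i < n" | "i = n" | "i > n" by linarith
    then show ?thesis
    proof cases
      case 3
      then have "i - n = Suc (i - Suc n)" by simp
      then show ?thesis using 3 lemA[of 0 n n N "s (i - Suc n)"] by (simp add: scons_def)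
    qed (auto simp: scons_def)
  qed
qed auto

lemma psub_id: "psub n LV M = M"
  by (induction M arbitrary: n) auto

lemma fundamental: "ltyping G M T \<Longrightarrow> (\<forall>i<length G. RED (G ! i) (s i)) \<Longrightarrow> RED T (psub 0 s M)"
proof (induction arbitrary: s rule: ltyping.induct)
  case (lt_var x G) then show ?case by simp
next
  case (lt_const G c T) then show ?case by (simp add: RED_const)
next
  case (lt_lam T G M U)
  have "RED (Arr T U) (LL (psub (Suc 0) s M))"
  proof (rule RED_lam)
    fix N assume "RED T N"
    then have "\<forall>i<length (T # G). RED ((T # G) ! i) (scons N s i)"
      using lt_lam.prems by (auto simp: scons_def split: nat.split)
    then show "RED U (lsubst 0 N (psub (Suc 0) s M))"
      using lt_lam.IH psub_scons[of 0 N s M] by simp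
  qed
  then show ?case by simp
next
  case (lt_app G M T U N) then show ?case by simp
qed

theorem typed_SN: "ltyping G M T \<Longrightarrow> lSN M"
proof -
  assume "ltyping G M T"
  then have "RED T (psub 0 LV M)" using fundamental[of G M T LV] RED_var by blast
  then show ?thesis using CR1 psub_id by metis
qed


fun ety :: "ty \<Rightarrow> sty" where
  "ety (TConst X) = Base"
| "ety (TPi t s) = Arr (ety t) (ety s)"
| "ety (TApp t M) = ety t"
| "ety (TCode a t) = ety t"
| "ety (TAll t) = ety t"

fun er :: "trm \<Rightarrow> lt" where
  "er (Const c) = LC c"
| "er (Var x) = LV x"
| "er (Lam t M) = LL (er M)"
| "er (App M N) = LA (er M) (er N)"
| "er (Quote a M) = er M"
| "er (Esc a M) = er M"
| "er (SLam M) = er M"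
| "er (SApp M A) = er M"
| "er (CSP a M) = er M"

fun nsl :: "trm \<Rightarrow> nat" where
  "nsl (Const c) = 0"
| "nsl (Var x) = 0"
| "nsl (Lam t M) = nsl M"
| "nsl (App M N) = nsl M + nsl N"
| "nsl (Quote a M) = nsl M"
| "nsl (Esc a M) = nsl M"
| "nsl (SLam M) = Suc (nsl M)"
| "nsl (SApp M A) = nsl M"
| "nsl (CSP a M) = nsl M"

fun nesc :: "trm \<Rightarrow> nat" where
  "nesc (Const c) = 0"
| "nesc (Var x) = 0"
| "nesc (Lam t M) = nesc M"
| "nesc (App M N) = nesc M + nesc N"
| "nesc (Quote a M) = nesc M"
| "nesc (Esc a M) = Suc (nesc M)"
| "nesc (SLam M) = nesc M"
| "nesc (SApp M A) = nesc M"
| "nesc (CSP a M) = nesc M"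

lemma ety_codes[simp]: "ety (codes A t) = ety t"
  by (induction A) (auto simp: codes_def)

lemma er_quotes[simp]: "er (quotes A M) = er M" by (induction A) (auto simp: quotes_def)
lemma nsl_quotes[simp]: "nsl (quotes A M) = nsl M" by (induction A) (auto simp: quotes_def)
lemma er_escs[simp]: "er (escs A M) = er M"
  by (induction A arbitrary: M) (auto simp: escs_def)
lemma nsl_escs[simp]: "nsl (escs A M) = nsl M"
  by (induction A arbitrary: M) (auto simp: escs_def)
lemma er_csps[simp]: "er (csps A M) = er M"
  by (induction A arbitrary: M) (auto simp: csps_def)
lemma nsl_csps[simp]: "nsl (csps A M) = nsl M"
  by (induction A arbitrary: M) (auto simp: csps_def)

lemma ety_lift[simp]: "ety (lift_ty d k t) = ety t" and er_lift[simp]: "er (lift_tm d k M) = llift d k (er M)"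
  by (induction t and M arbitrary: k and k) auto

lemma ety_sshift[simp]: "ety (sshift_ty k t) = ety t" and er_sshift[simp]: "er (sshift_tm k M) = er M"
  by (induction t and M arbitrary: k and k) auto

lemma ety_subst[simp]: "ety (subst_ty k N t) = ety t" and er_subst[simp]: "er (subst_tm k N M) = lsubst k (er N) (er M)"
  by (induction t and M arbitrary: k N and k N) auto

lemma ety_ssubst[simp]: "ety (ssubst_ty k A t) = ety t" and er_ssubst[simp]: "er (ssubst_tm k A M) = er M"
  by (induction t and M arbitrary: k A and k A) auto

lemma nsl_ssubst0: "ety (ssubst_ty k A t) = ety t" and nsl_ssubst[simp]: "nsl (ssubst_tm k A M) = nsl M"
  by (induction t and M arbitrary: k A and k A) auto

lemma ety_env_sshift[simp]: "map (\<lambda>p. ety (fst p)) (sshift_env G) = map (\<lambda>p. ety (fst p)) G"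
  by (induction G) (auto simp: sshift_env_def)

lemma typing_erase:
  shows "kwf S G K A \<Longrightarrow> True"
  and "kinding S G t K A \<Longrightarrow> True"
  and "typing S G M t A \<Longrightarrow> ltyping (map (\<lambda>p. ety (fst p)) G) (er M) (ety t)"
  and "keq S G K J A \<Longrightarrow> True"
  and "tyeq S G t s K A \<Longrightarrow> ety t = ety s"
  and "tmeq S G M N t A \<Longrightarrow> True"
proof (induction rule: kwf_kinding_typing_keq_tyeq_tmeq.inducts)
  case (t_var x G t A)
  then show ?case using ltyping.lt_var[of x "map (\<lambda>p. ety (fst p)) G"] by simp
next
  case (t_lam G s A M t)
  then show ?case using ltyping.lt_lam by fastforce
next
  case (t_app G M s t A N)
  then show ?case using ltyping.lt_app by fastforce
qed (auto intro: ltyping.intros)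

definition lexl :: "trm \<Rightarrow> trm \<Rightarrow> bool" where
  "lexl M' M = (nsl M' < nsl M \<or> (nsl M' = nsl M \<and> nesc M' < nesc M))"

lemma red_erase: "red M M' \<Longrightarrow> lbeta (er M) (er M') \<or> (er M' = er M \<and> lexl M' M)"
  by (induction rule: red.induct) (auto simp: lexl_def intro: lbeta.intros)

lemma no_chain_aux:
  assumes "lSN e"
  shows "er M = e \<Longrightarrow> \<not> (\<exists>f. f 0 = M \<and> (\<forall>i. red (f i) (f (Suc i))))"
  using assms
proof (induction arbitrary: M rule: Wellfounded.accp.induct)
  case (accI e)
  have W: "wf (inv_image (less_than <*lex*> less_than) (\<lambda>M. (nsl M, nesc M)))" by auto
  show ?case using accI.prems
  proof (induction M rule: wf_induct[OF W])
    case (1 M)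
    show ?case
    proof
      assume "\<exists>f. f 0 = M \<and> (\<forall>i. red (f i) (f (Suc i)))"
      then obtain f where f0: "f 0 = M" and fr: "\<forall>i. red (f i) (f (Suc i))" by blast
      let ?g = "\<lambda>i. f (Suc i)"
      have g: "\<forall>i. red (?g i) (?g (Suc i))" using fr by simp
      from red_erase[OF fr[rule_format, of 0]] f0
      have "lbeta e (er (f 1)) \<or> (er (f 1) = e \<and> lexl (f 1) M)" using 1 by simp
      then show False
      proof
        assume "lbeta e (er (f 1))"
        then show False using accI.IH g by fastforce
      next
        assume "er (f 1) = e \<and> lexl (f 1) M"
        then show False using 1 g by (fastforce simp: lexl_def)
      qed
    qed
  qed
qed

theorem theorem2:
  assumes "wf_sig S" and "wf_env S G" and "typing S G M1 t A"
  shows "\<not> (\<exists>M :: nat \<Rightarrow> trm. M 1 = M1 \<and> (\<forall>i\<ge>1. red (M i) (M (Suc i))))"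
proof
  assume "\<exists>M :: nat \<Rightarrow> trm. M 1 = M1 \<and> (\<forall>i\<ge>1. red (M i) (M (Suc i)))"
  then obtain M :: "nat \<Rightarrow> trm" where m1: "M 1 = M1" and mr: "\<forall>i\<ge>1. red (M i) (M (Suc i))" by blast
  have "ltyping (map (\<lambda>p. ety (fst p)) G) (er M1) (ety t)"
    using typing_erase(3)[OF assms(3)] .
  then have sn: "lSN (er M1)" by (rule typed_SN)
  have "\<exists>f. f 0 = M1 \<and> (\<forall>i. red (f i) (f (Suc i)))"
    using m1 mr by (intro exI[of _ "\<lambda>i. M (Suc i)"]) auto
  then show False using no_chain_aux[OF sn] by blast
qed

end
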